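(* Let $F$ be a totally real number field, $E$ a totally imaginary quadratic extension of $F$, with $E\subset\mathbb{C}$ and $F=E\cap\mathbb{R}$, let $\mathcal{O}_E$ be the ring of integers of $E$, and let $H$ be a Hermitian $(n+1)\times(n+1)$ matrix with entries in $E$ of signature $(n,1)$ such that the pair $(H,E/F)$ is admissible. Let $\Gamma$ be a subgroup of $\mathrm{SU}(H,\mathcal{O}_E)$ which contains a loxodromic element. Then $\mathbb{Q}(\mathrm{Tr}(g):g\in\Gamma)=E$ or $\mathbb{Q}(\mathrm{Tr}(g):g\in\Gamma)=F$.
   Context: Let $d=[F:\mathbb{Q}]$, and let $\tau_1=\mathrm{Id},\tau_2,\dots,\tau_d$ be embeddings $E\to\mathbb{C}$, one from each pair of complex-conjugate embeddings. For a matrix $X$ over $E$, ${}^{\tau}X$ denotes the matrix obtained by applying $\tau$ to each entry. The pair $(H,E/F)$ is admissible if $\mathrm{SU}({}^{\tau_i}H)$ (determinant one matrices preserving the Hermitian form ${}^{\tau_i}H$) is compact for all $i=2,\dots,d$. $\mathrm{SU}(H,\mathcal{O}_E)$ is the group of determinant-one matrices $g$ with entries in $\mathcal{O}_E$ satisfying $g^*Hg=H$. An element of $\mathrm{SU}(H)$ is loxodromic if it has an eigenvalue of modulus different from $1$. *)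

theory Defs
  imports "HOL-Analysis.Analysis" "HOL-Computational_Algebra.Polynomial"
begin

definition subfield_C :: "complex set \<Rightarrow> bool" where
  "subfield_C K \<longleftrightarrow> 0 \<in> K \<and> 1 \<in> K \<and>
     (\<forall>x\<in>K. \<forall>y\<in>K. x + y \<in> K \<and> x * y \<in> K) \<and>
     (\<forall>x\<in>K. - x \<in> K \<and> inverse x \<in> K)"

definition number_field :: "complex set \<Rightarrow> bool" where
  "number_field K \<longleftrightarrow> subfield_C K \<and>
     (\<exists>B. finite B \<and> B \<subseteq> K \<and>
        (\<forall>x\<in>K. \<exists>c. (\<forall>b\<in>B. c b \<in> \<rat>) \<and> x = (\<Sum>b\<in>B. c b * b)))"

definition field_emb :: "complex set \<Rightarrow> (complex \<Rightarrow> complex) \<Rightarrow> bool" where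
  "field_emb K \<sigma> \<longleftrightarrow> \<sigma> 1 = 1 \<and>
     (\<forall>x\<in>K. \<forall>y\<in>K. \<sigma> (x + y) = \<sigma> x + \<sigma> y \<and> \<sigma> (x * y) = \<sigma> x * \<sigma> y)"

definition totally_real :: "complex set \<Rightarrow> bool" where
  "totally_real K \<longleftrightarrow> (\<forall>\<sigma>. field_emb K \<sigma> \<longrightarrow> \<sigma> ` K \<subseteq> \<real>)"

definition totally_imaginary :: "complex set \<Rightarrow> bool" where
  "totally_imaginary K \<longleftrightarrow> (\<forall>\<sigma>. field_emb K \<sigma> \<longrightarrow> \<not> (\<sigma> ` K \<subseteq> \<real>))"

definition quadratic_ext :: "complex set \<Rightarrow> complex set \<Rightarrow> bool" where
  "quadratic_ext E F \<longleftrightarrow> F \<subseteq> E \<and>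
     (\<exists>\<alpha>\<in>E. \<alpha> \<notin> F \<and> E = {a + b * \<alpha> | a b. a \<in> F \<and> b \<in> F})"

definition ring_of_integers :: "complex set \<Rightarrow> complex set" where
  "ring_of_integers K = {x \<in> K. algebraic_int x}"

definition field_gen :: "complex set \<Rightarrow> complex set" where
  "field_gen S = \<Inter> {K. subfield_C K \<and> S \<subseteq> K}"

definition cadj :: "complex^'n^'n \<Rightarrow> complex^'n^'n" where
  "cadj M = (\<chi> i j. cnj (M $ j $ i))"

definition hermitian :: "complex^'n^'n \<Rightarrow> bool" where
  "hermitian M \<longleftrightarrow> cadj M = M"

definition emb_mat :: "(complex \<Rightarrow> complex) \<Rightarrow> complex^'n^'n \<Rightarrow> complex^'n^'n" where
  "emb_mat \<tau> M = (\<chi> i j. \<tau> (M $ i $ j))"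

definition char_poly_vec :: "complex^'n^'n \<Rightarrow> complex poly" where
  "char_poly_vec M = det (\<chi> i j. (if i = j then [:0, 1:] else 0) - [:M $ i $ j:])"

definition n_pos_eig :: "complex^'n^'n \<Rightarrow> nat" where
  "n_pos_eig M = (\<Sum>r\<in>{r. r \<in> \<real> \<and> Re r > 0 \<and> poly (char_poly_vec M) r = 0}.
                    order r (char_poly_vec M))"

definition n_neg_eig :: "complex^'n^'n \<Rightarrow> nat" where
  "n_neg_eig M = (\<Sum>r\<in>{r. r \<in> \<real> \<and> Re r < 0 \<and> poly (char_poly_vec M) r = 0}.
                    order r (char_poly_vec M))"

definition has_signature :: "complex^'n^'n \<Rightarrow> nat \<Rightarrow> nat \<Rightarrow> bool" where
  "has_signature M p q \<longleftrightarrow> hermitian M \<and> n_pos_eig M = p \<and> n_neg_eig M = q"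

definition SU :: "complex^'n^'n \<Rightarrow> (complex^'n^'n) set" where
  "SU H = {g. det g = 1 \<and> cadj g ** H ** g = H}"

definition SU_int :: "complex^'n^'n \<Rightarrow> complex set \<Rightarrow> (complex^'n^'n) set" where
  "SU_int H E = {g \<in> SU H. \<forall>i j. g $ i $ j \<in> ring_of_integers E}"

(* (H, E/F) admissible: SU(\<tau>H) compact for every embedding \<tau> of E other than
   the identity and complex conjugation (i.e. all non-identity pairs) *)
definition admissible :: "complex^'n^'n \<Rightarrow> complex set \<Rightarrow> bool" where
  "admissible H E \<longleftrightarrow> (\<forall>\<tau>. field_emb E \<tau> \<and> \<not> (\<forall>x\<in>E. \<tau> x = x) \<and> \<not> (\<forall>x\<in>E. \<tau> x = cnj x)
       \<longrightarrow> compact (SU (emb_mat \<tau> H)))"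

definition loxodromic :: "complex^'n^'n \<Rightarrow> bool" where
  "loxodromic g \<longleftrightarrow> (\<exists>(c::complex) v. v \<noteq> 0 \<and> g *v v = c *s v \<and> norm c \<noteq> 1)"

definition is_subgroup :: "(complex^'n^'n) set \<Rightarrow> (complex^'n^'n) set \<Rightarrow> bool" where
  "is_subgroup \<Gamma> G \<longleftrightarrow> \<Gamma> \<subseteq> G \<and> mat 1 \<in> \<Gamma> \<and> (\<forall>g\<in>\<Gamma>. \<forall>h\<in>\<Gamma>. g ** h \<in> \<Gamma>) \<and>
     (\<forall>g\<in>\<Gamma>. \<exists>h\<in>\<Gamma>. g ** h = mat 1)"

end

theory Submission
  imports Defs "Jordan_Normal_Form.Schur_Decomposition"
begin


lemma sf_0: "subfield_C K \<Longrightarrow> 0 \<in> K" by (simp add: subfield_C_def)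
lemma sf_1: "subfield_C K \<Longrightarrow> 1 \<in> K" by (simp add: subfield_C_def)
lemma sf_add: "subfield_C K \<Longrightarrow> x \<in> K \<Longrightarrow> y \<in> K \<Longrightarrow> x + y \<in> K" by (simp add: subfield_C_def)
lemma sf_mult: "subfield_C K \<Longrightarrow> x \<in> K \<Longrightarrow> y \<in> K \<Longrightarrow> x * y \<in> K" by (simp add: subfield_C_def)
lemma sf_uminus: "subfield_C K \<Longrightarrow> x \<in> K \<Longrightarrow> - x \<in> K" by (simp add: subfield_C_def)
lemma sf_inverse: "subfield_C K \<Longrightarrow> x \<in> K \<Longrightarrow> inverse x \<in> K" by (simp add: subfield_C_def)
lemma sf_diff: "subfield_C K \<Longrightarrow> x \<in> K \<Longrightarrow> y \<in> K \<Longrightarrow> x - y \<in> K"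
  using sf_add[of K x "-y"] sf_uminus[of K y] by simp
lemma sf_divide: "subfield_C K \<Longrightarrow> x \<in> K \<Longrightarrow> y \<in> K \<Longrightarrow> x / y \<in> K"
  using sf_mult[of K x "inverse y"] sf_inverse[of K y] by (simp add: divide_inverse)

lemma sf_of_nat: "subfield_C K \<Longrightarrow> of_nat n \<in> K"
  by (induction n) (auto simp: sf_0 sf_1 sf_add)
lemma sf_of_int: "subfield_C K \<Longrightarrow> of_int n \<in> K"
  by (cases n rule: int_cases) (auto simp: sf_of_nat sf_uminus simp del: of_nat_Suc)
lemma sf_Rats: "subfield_C K \<Longrightarrow> x \<in> \<rat> \<Longrightarrow> x \<in> K"
  by (erule Rats_cases') (auto intro!: sf_divide sf_of_int)

lemma sf_sum: "subfield_C K \<Longrightarrow> (\<And>a. a \<in> A \<Longrightarrow> f a \<in> K) \<Longrightarrow> sum f A \<in> K"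
  by (induction A rule: infinite_finite_induct) (auto simp: sf_0 sf_add)
lemma sf_prod: "subfield_C K \<Longrightarrow> (\<And>a. a \<in> A \<Longrightarrow> f a \<in> K) \<Longrightarrow> prod f A \<in> K"
  by (induction A rule: infinite_finite_induct) (auto simp: sf_1 sf_mult)
lemma sf_power: "subfield_C K \<Longrightarrow> x \<in> K \<Longrightarrow> x ^ n \<in> K"
  by (induction n) (auto simp: sf_1 sf_mult)

lemma subfield_UNIV: "subfield_C UNIV" by (simp add: subfield_C_def)

lemma field_gen_subfield: "subfield_C (field_gen S)"
  unfolding field_gen_def subfield_C_def by blast
lemma field_gen_sup: "S \<subseteq> field_gen S"
  unfolding field_gen_def by blast
lemma field_gen_least: "subfield_C K \<Longrightarrow> S \<subseteq> K \<Longrightarrow> field_gen S \<subseteq> K"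
  unfolding field_gen_def by blast
lemma field_gen_eq: "subfield_C K \<Longrightarrow> field_gen K = K"
  by (meson field_gen_least field_gen_sup subset_antisym subset_refl)

definition polyin :: "complex set \<Rightarrow> complex poly \<Rightarrow> bool" where
  "polyin M q \<longleftrightarrow> (\<forall>i. coeff q i \<in> M)"

definition algQ :: "complex \<Rightarrow> bool" where
  "algQ z \<longleftrightarrow> (\<exists>p. p \<noteq> 0 \<and> polyin \<rat> p \<and> poly p z = 0)"

lemma polyin_0: "subfield_C M \<Longrightarrow> polyin M 0" by (simp add: polyin_def sf_0)
lemma polyin_const: "subfield_C M \<Longrightarrow> a \<in> M \<Longrightarrow> polyin M [:a:]"
  by (auto simp: polyin_def coeff_pCons sf_0 split: nat.split)
lemma polyin_pCons: "subfield_C M \<Longrightarrow> a \<in> M \<Longrightarrow> polyin M p \<Longrightarrow> polyin M (pCons a p)"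
  by (auto simp: polyin_def coeff_pCons split: nat.split)
lemma polyin_add: "subfield_C M \<Longrightarrow> polyin M p \<Longrightarrow> polyin M q \<Longrightarrow> polyin M (p + q)"
  by (simp add: polyin_def sf_add)
lemma polyin_diff: "subfield_C M \<Longrightarrow> polyin M p \<Longrightarrow> polyin M q \<Longrightarrow> polyin M (p - q)"
  by (simp add: polyin_def sf_diff)
lemma polyin_smult: "subfield_C M \<Longrightarrow> a \<in> M \<Longrightarrow> polyin M q \<Longrightarrow> polyin M (Polynomial.smult a q)"
  by (simp add: polyin_def sf_mult)
lemma polyin_mult: "subfield_C M \<Longrightarrow> polyin M p \<Longrightarrow> polyin M q \<Longrightarrow> polyin M (p * q)"
  unfolding polyin_def coeff_mult by (auto intro!: sf_sum sf_mult)
lemma polyin_monom: "subfield_C M \<Longrightarrow> a \<in> M \<Longrightarrow> polyin M (monom a n)"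
  by (simp add: polyin_def coeff_monom sf_0)
lemma polyin_mono: "M \<subseteq> M' \<Longrightarrow> polyin M p \<Longrightarrow> polyin M' p"
  by (auto simp: polyin_def)

lemma polyin_div:
  assumes M: "subfield_C M" and p: "polyin M p" "lead_coeff p = 1"
  shows "polyin M q \<Longrightarrow> \<exists>s r. polyin M s \<and> polyin M r \<and> q = s * p + r \<and> (r = 0 \<or> degree r < degree p)"
proof (induction "degree q" arbitrary: q rule: less_induct)
  case less
  show ?case
  proof (cases "q = 0 \<or> degree q < degree p")
    case True
    then show ?thesis using less.prems polyin_0[OF M] by (intro exI[of _ 0] exI[of _ q]) auto
  next
    case False
    show ?thesis
    proof (cases "degree p = 0")
      case True
      then have "p = 1" using p(2) degree_0_id[OF True] by (metis one_pCons)
      then show ?thesis using less.prems polyin_0[OF M] by (intro exI[of _ q] exI[of _ 0]) auto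
    next
      case dp: False
      let ?k = "degree q - degree p"
      let ?t = "monom (lead_coeff q) ?k"
      define q' where "q' = q - ?t * p"
      have q0: "q \<noteq> 0" and dq: "degree p \<le> degree q" using False by auto
      have lt: "lead_coeff q \<in> M" using less.prems by (simp add: polyin_def)
      have pt: "polyin M ?t" by (rule polyin_monom[OF M lt])
      have pq': "polyin M q'" unfolding q'_def by (intro polyin_diff polyin_mult M less.prems pt p)
      have p0: "p \<noteq> 0" using p(2) by auto
      have lq0: "lead_coeff q \<noteq> 0" using q0 by simp
      have dtp: "degree (?t * p) = degree q"
        using lq0 p0 dq by (subst degree_mult_eq) (auto simp: degree_monom_eq)
      have ctp: "coeff (?t * p) (degree q) = lead_coeff q"
        using dq p(2) by (simp add: coeff_monom_mult)
      have "degree q' \<le> degree q" unfolding q'_def using dtp by (metis degree_diff_le order_refl)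
      moreover have "coeff q' (degree q) = 0" unfolding q'_def using ctp by simp
      moreover have "degree q > 0" using dq dp by simp
      ultimately have "degree q' < degree q"
        by (metis leading_coeff_0_iff le_neq_implies_less degree_0)
      from less.hyps[OF this pq'] obtain s r where sr: "polyin M s" "polyin M r" "q' = s * p + r"
        "r = 0 \<or> degree r < degree p" by blast
      have "q = (s + ?t) * p + r" using sr(3) unfolding q'_def by (simp add: algebra_simps)
      then show ?thesis using sr polyin_add[OF M sr(1) pt] by blast
    qed
  qed
qed

definition is_minpoly :: "complex set \<Rightarrow> complex \<Rightarrow> complex poly \<Rightarrow> bool" where
  "is_minpoly M x p \<longleftrightarrow> polyin M p \<and> lead_coeff p = 1 \<and> poly p x = 0 \<and>
     (\<forall>q. polyin M q \<longrightarrow> poly q x = 0 \<longrightarrow> q = 0 \<or> degree p \<le> degree q)"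

lemma minpoly_exists:
  assumes M: "subfield_C M" and x: "algQ x"
  shows "\<exists>p. is_minpoly M x p"
proof -
  define P where "P = (\<lambda>d. \<exists>q. polyin M q \<and> q \<noteq> 0 \<and> poly q x = 0 \<and> degree q = d)"
  from x obtain q0 where q0: "q0 \<noteq> 0" "polyin \<rat> q0" "poly q0 x = 0" by (auto simp: algQ_def)
  have "polyin M q0" using q0(2) sf_Rats[OF M] by (auto simp: polyin_def)
  then have "P (degree q0)" using q0 unfolding P_def by blast
  then have "P (Least P)" by (rule LeastI)
  then obtain q1 where q1: "polyin M q1" "q1 \<noteq> 0" "poly q1 x = 0" "degree q1 = Least P"
    unfolding P_def by blast
  define p where "p = Polynomial.smult (inverse (lead_coeff q1)) q1"
  have lc: "lead_coeff q1 \<in> M" using q1(1) by (simp add: polyin_def)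
  have "polyin M p" unfolding p_def by (intro polyin_smult M sf_inverse lc q1(1))
  moreover have "lead_coeff p = 1"
  proof -
    have lz: "lead_coeff q1 \<noteq> 0" using q1(2) by simp
    then show ?thesis by (simp add: p_def)
  qed
  moreover have "poly p x = 0" using q1(3) by (simp add: p_def)
  moreover have "degree p = Least P"
  proof -
    have lz: "lead_coeff q1 \<noteq> 0" using q1(2) by simp
    then show ?thesis using q1(4) by (simp add: p_def)
  qed
  moreover have "\<forall>q. polyin M q \<longrightarrow> poly q x = 0 \<longrightarrow> q = 0 \<or> Least P \<le> degree q"
    using Least_le[of P] unfolding P_def by blast
  ultimately show ?thesis unfolding is_minpoly_def by metis
qed

lemma minpoly_dvd:
  assumes M: "subfield_C M" and p: "is_minpoly M x p" and q: "polyin M q" "poly q x = 0"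
  shows "\<exists>s. polyin M s \<and> q = s * p"
proof -
  from polyin_div[OF M _ _ q(1)] p obtain s r where sr: "polyin M s" "polyin M r" "q = s * p + r"
    "r = 0 \<or> degree r < degree p" unfolding is_minpoly_def by blast
  have "poly r x = 0" using sr(3) q(2) p by (simp add: is_minpoly_def)
  then have "r = 0" using p sr(2,4) unfolding is_minpoly_def by force
  then show ?thesis using sr by auto
qed

lemma minpoly_degree:
  assumes p: "is_minpoly M x p" shows "degree p \<ge> 1"
proof (rule ccontr)
  assume "\<not> ?thesis"
  then have "degree p = 0" by simp
  then have "p = [:1:]" using p degree_0_id[of p] unfolding is_minpoly_def by metis
  then show False using p unfolding is_minpoly_def by simp
qed


interpretation QV: vector_space "\<lambda>(r::rat) (z::complex). of_rat r * z"
  by unfold_locales (auto simp: algebra_simps of_rat_add of_rat_mult)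

lemma polyin_Rats_Suc: "polyin A (pCons a p) \<Longrightarrow> polyin A p"
  unfolding polyin_def by (metis coeff_pCons_Suc)

lemma number_field_alg:
  assumes L: "number_field L" and z: "z \<in> L"
  shows "algQ z"
proof -
  from L obtain B where B: "finite B" "B \<subseteq> L"
    "\<forall>x\<in>L. \<exists>c. (\<forall>b\<in>B. c b \<in> \<rat>) \<and> x = (\<Sum>b\<in>B. c b * b)"
    and sfL: "subfield_C L" unfolding number_field_def by blast
  have span: "L \<subseteq> QV.span B"
  proof
    fix x assume "x \<in> L"
    then obtain c where c: "\<forall>b\<in>B. c b \<in> \<rat>" "x = (\<Sum>b\<in>B. c b * b)" using B by blast
    define r where "r = (\<lambda>b. SOME r. c b = of_rat r)"
    have cr: "c b = of_rat (r b)" if "b \<in> B" for b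
      using c(1) that unfolding r_def by (metis (mono_tags, lifting) Rats_cases someI_ex)
    have "x = (\<Sum>b\<in>B. of_rat (r b) * b)" using c(2) cr by (auto intro!: sum.cong)
    also have "\<dots> \<in> QV.span B"
      by (intro QV.span_sum QV.span_scale QV.span_base) auto
    finally show "x \<in> QV.span B" .
  qed
  define N where "N = card B"
  have zi: "z ^ i \<in> L" for i using sf_power[OF sfL z] .
  show ?thesis
  proof (cases "inj_on (\<lambda>i. z ^ i) {..N}")
    case True
    define S where "S = (\<lambda>i. z ^ i) ` {..N}"
    have cS: "card S = Suc N" unfolding S_def using True by (simp add: card_image)
    have SL: "S \<subseteq> QV.span B" using span zi unfolding S_def by blast
    have "\<not> QV.independent S"
    proof
      assume "QV.independent S"
      from QV.independent_span_bound[OF B(1) this SL] cS show False by (simp add: N_def)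
    qed
    then have "QV.dependent S" by simp
    then obtain T u where T: "finite T" "T \<subseteq> S" "(\<Sum>v\<in>T. of_rat (u v) * v) = 0"
      "\<exists>v\<in>T. u v \<noteq> 0"
      unfolding QV.dependent_explicit by blast
    define c where "c i = (if z ^ i \<in> T then of_rat (u (z ^ i)) else (0::complex))" for i
    define q where "q = (\<Sum>i\<le>N. monom (c i) i)"
    have cq: "coeff q j = (if j \<le> N then c j else 0)" for j
      unfolding q_def by (simp add: coeff_sum coeff_monom)
    have "poly q z = (\<Sum>i\<le>N. c i * z ^ i)"
      unfolding q_def by (simp add: poly_sum poly_monom)
    also have "\<dots> = (\<Sum>i\<in>{i\<in>{..N}. z ^ i \<in> T}. of_rat (u (z ^ i)) * z ^ i)"
      unfolding c_def by (rule sum.mono_neutral_cong_right) auto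
    also have "\<dots> = (\<Sum>v\<in>T. of_rat (u v) * v)"
    proof (rule sum.reindex_bij_betw)
      show "bij_betw (\<lambda>i. z ^ i) {i \<in> {..N}. z ^ i \<in> T} T"
        unfolding bij_betw_def
      proof
        show "inj_on (\<lambda>i. z ^ i) {i \<in> {..N}. z ^ i \<in> T}"
          using True by (rule inj_on_subset) auto
        show "(\<lambda>i. z ^ i) ` {i \<in> {..N}. z ^ i \<in> T} = T"
          using T(2) unfolding S_def by auto
      qed
    qed
    also have "\<dots> = 0" by (rule T(3))
    finally have pz: "poly q z = 0" .
    from T(4) obtain v where v: "v \<in> T" "u v \<noteq> 0" by blast
    then obtain j where j: "j \<le> N" "v = z ^ j" using T(2) unfolding S_def by auto
    have "coeff q j \<noteq> 0" using cq[of j] j v by (simp add: c_def)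
    then have "q \<noteq> 0" by auto
    moreover have "polyin \<rat> q" unfolding polyin_def cq c_def by auto
    ultimately show ?thesis using pz unfolding algQ_def by blast
  next
    case False
    then obtain i0 j0 where ij0: "i0 \<le> N" "j0 \<le> N" "i0 \<noteq> j0" "z ^ i0 = z ^ j0"
      unfolding inj_on_def by auto
    define i where "i = min i0 j0"
    define j where "j = max i0 j0"
    have ij: "i \<le> N" "j \<le> N" "i < j" "z ^ i = z ^ j"
      using ij0 unfolding i_def j_def by (auto simp: min_def max_def)
    define q where "q = monom (1::complex) j - monom 1 i"
    have "coeff q j = 1" using ij by (simp add: q_def coeff_monom)
    then have "q \<noteq> 0" by auto
    moreover have "polyin \<rat> q" unfolding polyin_def q_def by (auto simp: coeff_monom)
    moreover have "poly q z = 0" using ij by (simp add: q_def poly_monom)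
    ultimately show ?thesis unfolding algQ_def by blast
  qed
qed

definition adj :: "complex set \<Rightarrow> complex \<Rightarrow> complex set" where
  "adj M x = {poly q x | q. polyin M q}"

lemma poly_in_set:
  assumes R: "0 \<in> R" "\<And>a b. a \<in> R \<Longrightarrow> b \<in> R \<Longrightarrow> a + b \<in> R" "\<And>a b. a \<in> R \<Longrightarrow> b \<in> R \<Longrightarrow> a * b \<in> R"
    and MR: "M \<subseteq> R" and z: "z \<in> R"
  shows "polyin M q \<Longrightarrow> poly q z \<in> R"
proof (induction q rule: pCons_induct)
  case 0 then show ?case using R by simp
next
  case (pCons a p)
  have "a \<in> M" using pCons.prems unfolding polyin_def by (metis coeff_pCons_0)
  moreover have "poly p z \<in> R" using pCons.IH polyin_Rats_Suc[OF pCons.prems] by blast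
  ultimately show ?case using R MR z by auto
qed

lemma adj_sub: "subfield_C M \<Longrightarrow> M \<subseteq> adj M x"
  unfolding adj_def by (auto intro!: exI[of _ "[:_:]"] polyin_const)
lemma adj_x: "subfield_C M \<Longrightarrow> x \<in> adj M x"
  unfolding adj_def by (auto intro!: exI[of _ "[:0,1:]"] polyin_pCons polyin_const sf_0 sf_1)
lemma adj_I: "polyin M q \<Longrightarrow> poly q x \<in> adj M x"
  unfolding adj_def by blast
lemma adj_E: "z \<in> adj M x \<Longrightarrow> (\<And>q. polyin M q \<Longrightarrow> z = poly q x \<Longrightarrow> P) \<Longrightarrow> P"
  unfolding adj_def by blast
lemma adj_add: assumes M: "subfield_C M" and "a \<in> adj M x" "b \<in> adj M x" shows "a + b \<in> adj M x"
proof -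
  obtain q1 q2 where "polyin M q1" "a = poly q1 x" "polyin M q2" "b = poly q2 x"
    using assms(2,3) by (metis adj_E)
  then show ?thesis using adj_I[OF polyin_add[OF M], of q1 q2 x] by simp
qed
lemma adj_mult: assumes M: "subfield_C M" and "a \<in> adj M x" "b \<in> adj M x" shows "a * b \<in> adj M x"
proof -
  obtain q1 q2 where "polyin M q1" "a = poly q1 x" "polyin M q2" "b = poly q2 x"
    using assms(2,3) by (metis adj_E)
  then show ?thesis using adj_I[OF polyin_mult[OF M], of q1 q2 x] by simp
qed
lemma adj_uminus: assumes M: "subfield_C M" and "a \<in> adj M x" shows "- a \<in> adj M x"
proof -
  obtain q1 where "polyin M q1" "a = poly q1 x"
    using assms(2) by (metis adj_E)
  then show ?thesis using adj_I[OF polyin_diff[OF M polyin_0[OF M]], of q1 x] by simp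
qed
lemma adj_least:
  assumes "subfield_C K" "M \<subseteq> K" "x \<in> K" shows "adj M x \<subseteq> K"
proof
  fix z assume "z \<in> adj M x"
  then obtain q where q: "polyin M q" "z = poly q x" unfolding adj_def by blast
  show "z \<in> K" unfolding q(2)
    by (rule poly_in_set[of K M x q]) (use assms q in \<open>auto simp: sf_0 sf_add sf_mult\<close>)
qed

lemma alg_inv:
  assumes R: "0 \<in> R" "\<And>a b. a \<in> R \<Longrightarrow> b \<in> R \<Longrightarrow> a + b \<in> R" "\<And>a b. a \<in> R \<Longrightarrow> b \<in> R \<Longrightarrow> a * b \<in> R"
    and QR: "\<rat> \<subseteq> R" and z: "z \<in> R" "z \<noteq> 0" and a: "algQ z"
  shows "\<exists>w\<in>R. z * w = 1"
proof -
  have "\<forall>p. p \<noteq> 0 \<longrightarrow> polyin \<rat> p \<longrightarrow> poly p z = 0 \<longrightarrow> (\<exists>w\<in>R. z * w = 1)"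
  proof (intro allI)
    fix p :: "complex poly"
    show "p \<noteq> 0 \<longrightarrow> polyin \<rat> p \<longrightarrow> poly p z = 0 \<longrightarrow> (\<exists>w\<in>R. z * w = 1)"
    proof (induction p rule: pCons_induct)
      case 0 then show ?case by simp
    next
      case (pCons a p)
      show ?case
      proof (intro impI)
        assume h: "pCons a p \<noteq> 0" "polyin \<rat> (pCons a p)" "poly (pCons a p) z = 0"
        have aQ: "a \<in> \<rat>" using h(2) unfolding polyin_def by (metis coeff_pCons_0)
        have pQ: "polyin \<rat> p" using polyin_Rats_Suc[OF h(2)] .
        have pz: "poly p z \<in> R" by (rule poly_in_set[OF R QR z(1) pQ])
        show "\<exists>w\<in>R. z * w = 1"
        proof (cases "a = 0")
          case False
          have "- inverse a \<in> R" using aQ QR by auto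
          then have "- inverse a * poly p z \<in> R" using R(3)[OF _ pz] by blast
          moreover have "z * (- inverse a * poly p z) = 1"
          proof -
            have e: "z * poly p z = - a" using h(3) by (simp add: eq_neg_iff_add_eq_0 add.commute)
            have "z * (- inverse a * poly p z) = - inverse a * (z * poly p z)" by (simp add: algebra_simps)
            also have "\<dots> = 1" using False e by simp
            finally show ?thesis .
          qed
          ultimately show ?thesis by blast
        next
          case True
          then have "p \<noteq> 0" using h(1) by auto
          moreover have "poly p z = 0" using h(3) True z(2) by simp
          ultimately show ?thesis using pCons.IH pQ by blast
        qed
      qed
    qed
  qed
  then show ?thesis using a unfolding algQ_def by blast
qed

lemma adj_subfield:
  assumes M: "subfield_C M" and alg: "\<forall>z\<in>adj M x. algQ z"
  shows "subfield_C (adj M x)"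
proof -
  have i0: "0 \<in> adj M x" "1 \<in> adj M x" using adj_sub[OF M] sf_0[OF M] sf_1[OF M] by auto
  have inv: "inverse a \<in> adj M x" if a: "a \<in> adj M x" for a
  proof (cases "a = 0")
    case True then show ?thesis using i0 by auto
  next
    case False
    have Q: "\<rat> \<subseteq> adj M x" using adj_sub[OF M] sf_Rats[OF M] by auto
    have aa: "algQ a" using alg a by blast
    have "\<exists>w\<in>adj M x. a * w = 1"
      by (rule alg_inv[OF i0(1) adj_add[OF M] adj_mult[OF M] Q a False aa])
    then obtain w where w: "w \<in> adj M x" "a * w = 1" by blast
    then have "inverse a = w" by (simp add: inverse_unique)
    then show ?thesis using w by simp
  qed
  show ?thesis unfolding subfield_C_def
    by (intro conjI ballI i0 inv adj_add[OF M] adj_mult[OF M] adj_uminus[OF M])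
qed


lemma emb_0: assumes M: "subfield_C M" and s: "field_emb M \<sigma>" shows "\<sigma> 0 = 0"
proof -
  have "\<sigma> (0 + 0) = \<sigma> 0 + \<sigma> 0" using s sf_0[OF M] unfolding field_emb_def by blast
  then show ?thesis by simp
qed
lemma emb_1: "field_emb M \<sigma> \<Longrightarrow> \<sigma> 1 = 1" by (simp add: field_emb_def)
lemma emb_add: "field_emb M \<sigma> \<Longrightarrow> a \<in> M \<Longrightarrow> b \<in> M \<Longrightarrow> \<sigma> (a + b) = \<sigma> a + \<sigma> b"
  by (simp add: field_emb_def)
lemma emb_mult: "field_emb M \<sigma> \<Longrightarrow> a \<in> M \<Longrightarrow> b \<in> M \<Longrightarrow> \<sigma> (a * b) = \<sigma> a * \<sigma> b"
  by (simp add: field_emb_def)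
lemma emb_diff: assumes M: "subfield_C M" and s: "field_emb M \<sigma>" and ab: "a \<in> M" "b \<in> M"
  shows "\<sigma> (a - b) = \<sigma> a - \<sigma> b"
proof -
  have "\<sigma> (a - b + b) = \<sigma> (a - b) + \<sigma> b" using emb_add[OF s sf_diff[OF M ab] ab(2)] .
  then show ?thesis by simp
qed
lemma emb_sum: assumes M: "subfield_C M" and s: "field_emb M \<sigma>"
  shows "(\<And>a. a \<in> A \<Longrightarrow> f a \<in> M) \<Longrightarrow> \<sigma> (sum f A) = (\<Sum>a\<in>A. \<sigma> (f a))"
proof (induction A rule: infinite_finite_induct)
  case (infinite A) then show ?case using emb_0[OF M s] by simp
next
  case empty then show ?case using emb_0[OF M s] by simp
next
  case (insert a A)
  have "sum f A \<in> M" using insert.prems by (intro sf_sum[OF M]) auto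
  then show ?case using insert emb_add[OF s, of "f a" "sum f A"] by simp
qed
lemma emb_prod: assumes M: "subfield_C M" and s: "field_emb M \<sigma>"
  shows "(\<And>a. a \<in> A \<Longrightarrow> f a \<in> M) \<Longrightarrow> \<sigma> (prod f A) = (\<Prod>a\<in>A. \<sigma> (f a))"
proof (induction A rule: infinite_finite_induct)
  case (infinite A) then show ?case using emb_1[OF s] by simp
next
  case empty then show ?case using emb_1[OF s] by simp
next
  case (insert a A)
  have "prod f A \<in> M" using insert.prems by (intro sf_prod[OF M]) auto
  then show ?case using insert emb_mult[OF s, of "f a" "prod f A"] by simp
qed

lemma coeff_mp: "\<sigma> 0 = 0 \<Longrightarrow> coeff (map_poly \<sigma> q) i = \<sigma> (coeff q i)"
  by (simp add: coeff_map_poly)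

lemma mp_add: assumes M: "subfield_C M" and s: "field_emb M \<sigma>" and pq: "polyin M p" "polyin M q"
  shows "map_poly \<sigma> (p + q) = map_poly \<sigma> p + map_poly \<sigma> q"
  using pq emb_0[OF M s] by (intro poly_eqI) (simp add: coeff_mp emb_add[OF s] polyin_def)
lemma mp_diff: assumes M: "subfield_C M" and s: "field_emb M \<sigma>" and pq: "polyin M p" "polyin M q"
  shows "map_poly \<sigma> (p - q) = map_poly \<sigma> p - map_poly \<sigma> q"
  using pq emb_0[OF M s] by (intro poly_eqI) (simp add: coeff_mp emb_diff[OF M s] polyin_def)
lemma mp_mult: assumes M: "subfield_C M" and s: "field_emb M \<sigma>" and pq: "polyin M p" "polyin M q"
  shows "map_poly \<sigma> (p * q) = map_poly \<sigma> p * map_poly \<sigma> q"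
proof (rule poly_eqI)
  fix n
  have s0: "\<sigma> 0 = 0" by (rule emb_0[OF M s])
  have "coeff (map_poly \<sigma> (p * q)) n = \<sigma> (\<Sum>i\<le>n. coeff p i * coeff q (n - i))"
    by (simp add: coeff_mp[of \<sigma>, OF s0] coeff_mult)
  also have "\<dots> = (\<Sum>i\<le>n. \<sigma> (coeff p i * coeff q (n - i)))"
    using pq by (intro emb_sum[OF M s]) (auto simp: polyin_def intro: sf_mult[OF M])
  also have "\<dots> = (\<Sum>i\<le>n. \<sigma> (coeff p i) * \<sigma> (coeff q (n - i)))"
    using pq by (intro sum.cong refl emb_mult[OF s]) (auto simp: polyin_def)
  also have "\<dots> = coeff (map_poly \<sigma> p * map_poly \<sigma> q) n"
    by (simp add: coeff_mult coeff_mp[of \<sigma>, OF s0])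
  finally show "coeff (map_poly \<sigma> (p * q)) n = coeff (map_poly \<sigma> p * map_poly \<sigma> q) n" .
qed
lemma mp_const: "\<sigma> 0 = 0 \<Longrightarrow> map_poly \<sigma> [:a:] = [:\<sigma> a:]"
  by (intro poly_eqI) (simp add: coeff_mp coeff_pCons split: nat.split)
lemma mp_X: "\<sigma> 0 = 0 \<Longrightarrow> \<sigma> 1 = 1 \<Longrightarrow> map_poly \<sigma> [:0, 1:] = [:0, 1:]"
  by (intro poly_eqI) (simp add: coeff_mp coeff_pCons split: nat.split)

lemma ext_step:
  assumes M: "subfield_C M" and s: "field_emb M \<sigma>" and p: "is_minpoly M x p"
    and y: "poly (map_poly \<sigma> p) y = 0"
  shows "\<exists>\<tau>. field_emb (adj M x) \<tau> \<and> (\<forall>m\<in>M. \<tau> m = \<sigma> m) \<and> \<tau> x = y"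
proof -
  have s0: "\<sigma> 0 = 0" by (rule emb_0[OF M s])
  have pM: "polyin M p" using p by (simp add: is_minpoly_def)
  have wd: "poly (map_poly \<sigma> q1) y = poly (map_poly \<sigma> q2) y"
    if q: "polyin M q1" "polyin M q2" "poly q1 x = poly q2 x" for q1 q2
  proof -
    have "polyin M (q1 - q2)" using polyin_diff[OF M q(1,2)] .
    moreover have "poly (q1 - q2) x = 0" using q(3) by simp
    ultimately obtain sp where sp: "polyin M sp" "q1 - q2 = sp * p" using minpoly_dvd[OF M p] by blast
    have "map_poly \<sigma> q1 - map_poly \<sigma> q2 = map_poly \<sigma> (q1 - q2)" using mp_diff[OF M s q(1,2)] by simp
    also have "\<dots> = map_poly \<sigma> sp * map_poly \<sigma> p" using sp mp_mult[OF M s sp(1) pM] by simp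
    finally have "poly (map_poly \<sigma> q1 - map_poly \<sigma> q2) y = 0" using y by simp
    then show ?thesis by simp
  qed
  define \<tau> where "\<tau> z = poly (map_poly \<sigma> (SOME q. polyin M q \<and> poly q x = z)) y" for z
  have tq: "\<tau> (poly q x) = poly (map_poly \<sigma> q) y" if q: "polyin M q" for q
  proof -
    have ex: "\<exists>q'. polyin M q' \<and> poly q' x = poly q x" using q by blast
    have "polyin M (SOME q'. polyin M q' \<and> poly q' x = poly q x) \<and>
       poly (SOME q'. polyin M q' \<and> poly q' x = poly q x) x = poly q x"
      by (rule someI_ex[OF ex])
    then show ?thesis unfolding \<tau>_def using wd q by blast
  qed
  have t1: "\<tau> 1 = 1"
    using tq[OF polyin_const[OF M sf_1[OF M]]] mp_const[of \<sigma>, OF s0, of 1] emb_1[OF s] by simp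
  have tM: "\<tau> m = \<sigma> m" if "m \<in> M" for m
    using tq[OF polyin_const[OF M that]] mp_const[of \<sigma>, OF s0, of m] by simp
  have tx: "\<tau> x = y"
  proof -
    have "polyin M [:0, 1:]" by (intro polyin_pCons polyin_const M sf_0 sf_1)
    from tq[OF this] show ?thesis using mp_X[of \<sigma>, OF s0 emb_1[OF s]] by simp
  qed
  have hom: "\<tau> (a + b) = \<tau> a + \<tau> b \<and> \<tau> (a * b) = \<tau> a * \<tau> b"
    if ab: "a \<in> adj M x" "b \<in> adj M x" for a b
  proof -
    obtain q1 q2 where q: "polyin M q1" "a = poly q1 x" "polyin M q2" "b = poly q2 x"
      using ab by (metis adj_E)
    have "\<tau> (a + b) = \<tau> (poly (q1 + q2) x)" using q by simp
    also have "\<dots> = poly (map_poly \<sigma> (q1 + q2)) y" using tq[OF polyin_add[OF M q(1,3)]] .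
    also have "\<dots> = \<tau> a + \<tau> b" using mp_add[OF M s q(1,3)] tq[OF q(1)] tq[OF q(3)] q by simp
    finally have 1: "\<tau> (a + b) = \<tau> a + \<tau> b" .
    have "\<tau> (a * b) = \<tau> (poly (q1 * q2) x)" using q by simp
    also have "\<dots> = poly (map_poly \<sigma> (q1 * q2)) y" using tq[OF polyin_mult[OF M q(1,3)]] .
    also have "\<dots> = \<tau> a * \<tau> b" using mp_mult[OF M s q(1,3)] tq[OF q(1)] tq[OF q(3)] q by simp
    finally show ?thesis using 1 by simp
  qed
  have "field_emb (adj M x) \<tau>" unfolding field_emb_def using t1 hom by blast
  then show ?thesis using tM tx by blast
qed

lemma mp_root_exists:
  assumes M: "subfield_C M" and s: "field_emb M \<sigma>" and p: "is_minpoly M x p"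
  shows "\<exists>y. poly (map_poly \<sigma> p) y = 0"
proof -
  have s0: "\<sigma> 0 = 0" by (rule emb_0[OF M s])
  have lc: "lead_coeff p = 1" and dp: "degree p \<ge> 1" using p minpoly_degree[OF p] by (auto simp: is_minpoly_def)
  have "coeff (map_poly \<sigma> p) (degree p) = 1" using lc emb_1[OF s] by (simp add: coeff_mp[of \<sigma>, OF s0])
  then have "degree p \<le> degree (map_poly \<sigma> p)" by (simp add: le_degree)
  then have "degree (map_poly \<sigma> p) \<noteq> 0" using dp by simp
  then have "\<not> constant (poly (map_poly \<sigma> p))" by (simp add: constant_degree)
  then show ?thesis using fundamental_theorem_of_algebra by blast
qed

lemma ext_gen:
  assumes "finite B"
  shows "subfield_C M \<Longrightarrow> field_emb M \<sigma> \<Longrightarrow> (\<forall>z\<in>field_gen (M \<union> B). algQ z) \<Longrightarrow>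
     \<exists>\<tau>. field_emb (field_gen (M \<union> B)) \<tau> \<and> (\<forall>m\<in>M. \<tau> m = \<sigma> m)"
  using assms
proof (induction B arbitrary: M \<sigma> rule: finite_induct)
  case empty
  then show ?case using field_gen_eq[of M] by auto
next
  case (insert b B)
  note M = insert.prems(1) and s = insert.prems(2)
  define G where "G = field_gen (M \<union> insert b B)"
  have sG: "subfield_C G" unfolding G_def by (rule field_gen_subfield)
  have MG: "M \<union> insert b B \<subseteq> G" unfolding G_def by (rule field_gen_sup)
  have AG: "adj M b \<subseteq> G" by (rule adj_least[OF sG]) (use MG in auto)
  have algA: "\<forall>z\<in>adj M b. algQ z" using AG insert.prems(3) unfolding G_def by blast
  have sA: "subfield_C (adj M b)" by (rule adj_subfield[OF M algA])
  have eq: "field_gen (adj M b \<union> B) = G"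
  proof
    show "field_gen (adj M b \<union> B) \<subseteq> G" by (rule field_gen_least[OF sG]) (use AG MG in auto)
    show "G \<subseteq> field_gen (adj M b \<union> B)" unfolding G_def
      by (rule field_gen_least[OF field_gen_subfield])
        (use field_gen_sup[of "adj M b \<union> B"] adj_sub[OF M] adj_x[OF M, of b] in blast)
  qed
  have "algQ b" using insert.prems(3) MG unfolding G_def by blast
  then obtain p where p: "is_minpoly M b p" using minpoly_exists[OF M] by blast
  obtain y where y: "poly (map_poly \<sigma> p) y = 0" using mp_root_exists[OF M s p] by blast
  obtain \<sigma>' where s': "field_emb (adj M b) \<sigma>'" "\<forall>m\<in>M. \<sigma>' m = \<sigma> m"
    using ext_step[OF M s p y] by blast
  have "\<forall>z\<in>field_gen (adj M b \<union> B). algQ z" using eq insert.prems(3) unfolding G_def by simp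
  from insert.IH[OF sA s'(1) this] obtain \<tau> where
    t: "field_emb (field_gen (adj M b \<union> B)) \<tau>" "\<forall>m\<in>adj M b. \<tau> m = \<sigma>' m" by blast
  have "\<forall>m\<in>M. \<tau> m = \<sigma> m" using t(2) s'(2) adj_sub[OF M, of b] by auto
  moreover have "field_emb (field_gen (M \<union> insert b B)) \<tau>" using t(1) eq unfolding G_def by simp
  ultimately show ?case by blast
qed

lemma ext_nf:
  assumes L: "number_field L" and M: "subfield_C M" "M \<subseteq> L" and s: "field_emb M \<sigma>"
  shows "\<exists>\<tau>. field_emb L \<tau> \<and> (\<forall>m\<in>M. \<tau> m = \<sigma> m)"
proof -
  from L obtain B where B: "finite B" "B \<subseteq> L"
    "\<forall>x\<in>L. \<exists>c. (\<forall>b\<in>B. c b \<in> \<rat>) \<and> x = (\<Sum>b\<in>B. c b * b)"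
    and sfL: "subfield_C L" unfolding number_field_def by blast
  have eq: "field_gen (M \<union> B) = L"
  proof
    show "field_gen (M \<union> B) \<subseteq> L" by (rule field_gen_least[OF sfL]) (use M B in auto)
    show "L \<subseteq> field_gen (M \<union> B)"
    proof
      fix x assume "x \<in> L"
      then obtain c where c: "\<forall>b\<in>B. c b \<in> \<rat>" "x = (\<Sum>b\<in>B. c b * b)" using B by blast
      have G: "subfield_C (field_gen (M \<union> B))" by (rule field_gen_subfield)
      have "(\<Sum>b\<in>B. c b * b) \<in> field_gen (M \<union> B)"
        using c(1) field_gen_sup[of "M \<union> B"] sf_Rats[OF G]
        by (intro sf_sum[OF G] sf_mult[OF G]) auto
      then show "x \<in> field_gen (M \<union> B)" using c(2) by simp
    qed
  qed
  have "\<forall>z\<in>field_gen (M \<union> B). algQ z" using eq number_field_alg[OF L] by simp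
  from ext_gen[OF B(1) M(1) s this] eq show ?thesis by simp
qed

lemma other_root:
  assumes K: "subfield_C K" and p: "is_minpoly K \<theta> p" and th: "\<theta> \<notin> K"
  shows "\<exists>\<theta>'. poly p \<theta>' = 0 \<and> \<theta>' \<noteq> \<theta>"
proof (rule ccontr)
  assume H: "\<not> ?thesis"
  have pK: "polyin K p" and lc: "lead_coeff p = 1" and pt: "poly p \<theta> = 0"
    and mn: "\<forall>q. polyin K q \<longrightarrow> poly q \<theta> = 0 \<longrightarrow> q = 0 \<or> degree p \<le> degree q"
    using p unfolding is_minpoly_def by auto
  have d1: "degree p \<ge> 1" by (rule minpoly_degree[OF p])
  have d2: "degree p \<ge> 2"
  proof (rule ccontr)
    assume "\<not> ?thesis"
    then have dp: "degree p = 1" using d1 by simp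
    have "poly p \<theta> = coeff p 0 + coeff p 1 * \<theta>" unfolding poly_altdef dp by simp
    then have "\<theta> = - coeff p 0" using pt lc dp by (simp add: eq_neg_iff_add_eq_0 add.commute)
    moreover have "- coeff p 0 \<in> K" using pK by (simp add: polyin_def sf_uminus[OF K])
    ultimately show False using th by simp
  qed
  obtain as where as: "Polynomial.smult (coeff p (degree p)) (\<Prod>a\<leftarrow>as. [:- a, 1:]) = p"
    "length as = degree p" using fundamental_theorem_algebra_factorized[of p] by blast
  have pe: "p = (\<Prod>a\<leftarrow>as. [:- a, 1:])" using as(1) lc by simp
  have "\<forall>a\<in>set as. a = \<theta>"
  proof
    fix a assume "a \<in> set as"
    then have "poly p a = 0" unfolding pe by (auto simp: poly_prod_list_zero_iff)
    then show "a = \<theta>" using H by blast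
  qed
  then have "as = replicate (length as) \<theta>" by (simp add: replicate_length_same)
  then have pe2: "p = [:- \<theta>, 1:] ^ degree p" using pe as(2) by (metis map_replicate prod_list_replicate)
  obtain m where m: "degree p = Suc m" "m \<ge> 1" using d2 by (cases "degree p") auto
  have "pderiv p = Polynomial.smult (of_nat (Suc m)) ([:- \<theta>, 1:] ^ m) * pderiv [:- \<theta>, 1:]"
    by (subst pe2, unfold m(1), rule pderiv_power_Suc)
  then have "poly (pderiv p) \<theta> = 0" using m(2) by (simp add: zero_power)
  moreover have "polyin K (pderiv p)" using pK
    by (auto simp: polyin_def coeff_pderiv intro!: sf_mult[OF K] sf_add[OF K] sf_1[OF K] sf_of_nat[OF K])
  ultimately have "pderiv p = 0 \<or> degree p \<le> degree (pderiv p)" using mn by blast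
  moreover have "pderiv p \<noteq> 0" using d1 by (simp add: pderiv_eq_0_iff)
  moreover have "degree (pderiv p) < degree p" using d1 by (simp add: degree_pderiv)
  ultimately show False by simp
qed

lemma move_emb:
  assumes L: "number_field L" and K: "subfield_C K" "K \<subseteq> L" and th: "\<theta> \<in> L" "\<theta> \<notin> K"
  shows "\<exists>\<tau>. field_emb L \<tau> \<and> (\<forall>k\<in>K. \<tau> k = k) \<and> \<tau> \<theta> \<noteq> \<theta>"
proof -
  have "algQ \<theta>" using number_field_alg[OF L th(1)] .
  then obtain p where p: "is_minpoly K \<theta> p" using minpoly_exists[OF K(1)] by blast
  obtain \<theta>' where t': "poly p \<theta>' = 0" "\<theta>' \<noteq> \<theta>" using other_root[OF K(1) p th(2)] by blast
  have sid: "field_emb K (\<lambda>z. z)" by (simp add: field_emb_def)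
  have "map_poly (\<lambda>z. z) p = p" by (simp add: map_poly_idI)
  then obtain \<tau>0 where t0: "field_emb (adj K \<theta>) \<tau>0" "\<forall>m\<in>K. \<tau>0 m = m" "\<tau>0 \<theta> = \<theta>'"
    using ext_step[OF K(1) sid p, of \<theta>'] t'(1) by auto
  have sfL: "subfield_C L" using L by (simp add: number_field_def)
  have AL: "adj K \<theta> \<subseteq> L" by (rule adj_least[OF sfL K(2) th(1)])
  have sA: "subfield_C (adj K \<theta>)"
    by (rule adj_subfield[OF K(1)]) (use AL number_field_alg[OF L] in blast)
  obtain \<tau> where t: "field_emb L \<tau>" "\<forall>m\<in>adj K \<theta>. \<tau> m = \<tau>0 m"
    using ext_nf[OF L sA AL t0(1)] by blast
  have "\<tau> \<theta> = \<theta>'" using t(2) t0(3) adj_x[OF K(1), of \<theta>] by simp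
  moreover have "\<forall>k\<in>K. \<tau> k = k" using t(2) t0(2) adj_sub[OF K(1), of \<theta>] by auto
  ultimately show ?thesis using t(1) t'(2) by blast
qed


lemma geo_avg_tendsto:
  fixes \<rho> :: complex
  assumes "norm \<rho> \<le> 1"
  shows "(\<lambda>N. (\<Sum>k<N. \<rho> ^ k) / of_nat N) \<longlonglongrightarrow> (if \<rho> = 1 then 1 else 0)"
proof (cases "\<rho> = 1")
  case True
  have "eventually (\<lambda>N. (\<Sum>k<N. \<rho> ^ k) / of_nat N = 1) sequentially"
    using eventually_gt_at_top[of 0] by eventually_elim (simp add: True)
  then show ?thesis using True by (simp add: tendsto_eventually)
next
  case False
  define K where "K = 2 / norm (1 - \<rho>)"
  have bound: "norm ((\<Sum>k<N. \<rho> ^ k) / of_nat N) \<le> K / real N" for N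
  proof -
    have "(\<Sum>k<N. \<rho> ^ k) = (1 - \<rho> ^ N) / (1 - \<rho>)" using False by (simp add: sum_gp_strict)
    moreover have "norm (1 - \<rho> ^ N) \<le> 2"
    proof -
      have "norm (1 - \<rho> ^ N) \<le> norm (1::complex) + norm (\<rho> ^ N)" by (rule norm_triangle_ineq4)
      also have "norm (\<rho> ^ N) \<le> 1" using assms by (simp add: norm_power power_le_one)
      finally show ?thesis by simp
    qed
    ultimately have "norm (\<Sum>k<N. \<rho> ^ k) \<le> K" using False
      by (simp add: K_def norm_divide divide_right_mono)
    then show ?thesis by (simp add: norm_divide divide_right_mono)
  qed
  have "(\<lambda>N. K / real N) \<longlonglongrightarrow> 0" by (rule lim_const_over_n)
  then have "(\<lambda>N. (\<Sum>k<N. \<rho> ^ k) / of_nat N) \<longlonglongrightarrow> 0"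
    by (rule Lim_null_comparison[rotated]) (use bound in auto)
  then show ?thesis using False by simp
qed

lemma power_sums_bounded:
  fixes l :: "nat \<Rightarrow> complex"
  assumes C: "\<And>k. norm (\<Sum>i<n. l i ^ k) \<le> C" and j: "j < n"
  shows "norm (l j) \<le> 1"
proof (rule ccontr)
  assume "\<not> ?thesis"
  then have lj: "norm (l j) > 1" by simp
  define R where "R = Max ((\<lambda>i. norm (l i)) ` {..<n})"
  have fin: "finite ((\<lambda>i. norm (l i)) ` {..<n})" by simp
  have Rge: "norm (l i) \<le> R" if "i < n" for i unfolding R_def using that by (intro Max_ge) auto
  have R1: "R > 1" using Rge[OF j] lj by simp
  have "R \<in> (\<lambda>i. norm (l i)) ` {..<n}" unfolding R_def using j by (intro Max_in fin) auto
  then obtain i0 where i0: "i0 < n" "norm (l i0) = R" by auto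
  define \<mu> where "\<mu> = cnj (l i0) / of_real R / of_real R"
  define \<rho> where "\<rho> i = l i * \<mu>" for i
  have nmu: "norm \<mu> = 1 / R" using i0 R1 by (simp add: \<mu>_def norm_divide norm_mult abs_of_pos field_simps)
  have nrho: "norm (\<rho> i) \<le> 1" if "i < n" for i
    using Rge[OF that] R1 by (simp add: \<rho>_def nmu norm_mult divide_le_eq_1)
  have rho0: "\<rho> i0 = 1"
  proof -
    have "l i0 * cnj (l i0) = of_real (R ^ 2)" using complex_norm_square[of "l i0"] i0(2) by simp
    then show ?thesis using R1 by (simp add: \<rho>_def \<mu>_def power2_eq_square field_simps)
  qed
  define A where "A N = (\<Sum>i<n. (\<Sum>k<N. \<rho> i ^ k) / of_nat N)" for N
  have lim1: "A \<longlonglongrightarrow> (\<Sum>i<n. (if \<rho> i = 1 then 1 else 0))"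
    unfolding A_def by (intro tendsto_sum geo_avg_tendsto nrho) auto
  have C0: "C \<ge> 0" using C[of 0] norm_ge_zero order_trans by blast
  define S where "S = C * (R / (R - 1))"
  have A_eq: "A N = (\<Sum>k<N. (\<Sum>i<n. l i ^ k) * \<mu> ^ k) / of_nat N" for N
    unfolding A_def \<rho>_def
    by (simp add: sum_divide_distrib[symmetric] sum_distrib_right power_mult_distrib sum.swap[of _ "{..<N}"])
  have geo: "(\<Sum>k<N. (1 / R) ^ k) \<le> R / (R - 1)" for N
  proof -
    have x1: "1 / R \<noteq> 1" "1 / R < 1" "0 \<le> 1 / R" using R1 by auto
    have "(\<Sum>k<N. (1 / R) ^ k) = (1 - (1 / R) ^ N) / (1 - 1 / R)"
      by (subst sum_gp_strict, subst if_not_P[OF x1(1)]) (rule refl)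
    also have "\<dots> \<le> 1 / (1 - 1 / R)" using x1 by (intro divide_right_mono) auto
    also have "\<dots> = R / (R - 1)" using R1 by (simp add: field_simps)
    finally show ?thesis .
  qed
  have bound: "norm (A N) \<le> S / real N" for N
  proof -
    have "norm (\<Sum>k<N. (\<Sum>i<n. l i ^ k) * \<mu> ^ k) \<le> (\<Sum>k<N. norm ((\<Sum>i<n. l i ^ k) * \<mu> ^ k))"
      by (rule norm_sum)
    also have "\<dots> \<le> (\<Sum>k<N. C * (1 / R) ^ k)"
      using R1 by (intro sum_mono) (simp add: norm_mult norm_power nmu C mult_right_mono)
    also have "\<dots> = C * (\<Sum>k<N. (1 / R) ^ k)" by (simp add: sum_distrib_left)
    also have "\<dots> \<le> S" unfolding S_def using C0 geo by (intro mult_left_mono) auto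
    finally show ?thesis unfolding A_eq by (simp add: norm_divide divide_right_mono)
  qed
  have "(\<lambda>N. S / real N) \<longlonglongrightarrow> 0" by (rule lim_const_over_n)
  then have lim2: "A \<longlonglongrightarrow> 0"
    by (rule Lim_null_comparison[rotated]) (use bound in auto)
  have "(\<Sum>i<n. (if \<rho> i = 1 then 1 else 0)) = (0::complex)" using LIMSEQ_unique[OF lim1 lim2] .
  then have "Re (\<Sum>i<n. (if \<rho> i = 1 then 1 else 0)) = 0" by simp
  moreover have "Re (\<Sum>i<n. (if \<rho> i = 1 then 1 else (0::complex))) \<ge> 1"
  proof -
    have "Re (\<Sum>i<n. (if \<rho> i = 1 then 1 else (0::complex))) = (\<Sum>i<n. (if \<rho> i = 1 then 1 else 0))"
      unfolding Re_sum by (intro sum.cong refl) auto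
    also have "\<dots> \<ge> (if \<rho> i0 = 1 then 1 else 0)"
      by (rule member_le_sum) (use i0 in auto)
    finally show ?thesis using rho0 by simp
  qed
  ultimately show False by simp
qed


definition fb :: "nat \<Rightarrow> 'n::finite" where
  "fb = (SOME h. bij_betw h {0..<CARD('n)} (UNIV::'n set))"

lemma fb_bij: "bij_betw (fb :: nat \<Rightarrow> 'n::finite) {0..<CARD('n)} UNIV"
proof -
  have "\<exists>h. bij_betw h {0..<CARD('n)} (UNIV::'n set)" by (rule ex_bij_betw_nat_finite) simp
  then show ?thesis unfolding fb_def by (rule someI_ex)
qed

lemma sum_fb: "(\<Sum>k\<in>(UNIV::'n::finite set). f k) = (\<Sum>l\<in>{0..<CARD('n)}. f (fb l))"
  by (rule sum.reindex_bij_betw[OF fb_bij, symmetric])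

lemma fb_inj: "i < CARD('n::finite) \<Longrightarrow> j < CARD('n) \<Longrightarrow> (fb i :: 'n) = fb j \<longleftrightarrow> i = j"
  using fb_bij[where 'n='n] unfolding bij_betw_def inj_on_def by auto

lemma fb_surj: "\<exists>l < CARD('n::finite). (fb l :: 'n) = k"
  using fb_bij[where 'n='n] unfolding bij_betw_def by (metis UNIV_I atLeastLessThan_iff imageE)

definition tm :: "complex^'n::finite^'n \<Rightarrow> complex Matrix.mat" where
  "tm A = Matrix.mat CARD('n) CARD('n) (\<lambda>(i,j). A $ fb i $ fb j)"

lemma tm_carrier: "tm (A :: complex^'n::finite^'n) \<in> carrier_mat CARD('n) CARD('n)"
  by (simp add: tm_def)

lemma tm_dims[simp]: "dim_row (tm (A :: complex^'n::finite^'n)) = CARD('n)"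
  "dim_col (tm (A :: complex^'n::finite^'n)) = CARD('n)"
  by (simp_all add: tm_def)

lemma tm_index: "i < CARD('n::finite) \<Longrightarrow> j < CARD('n) \<Longrightarrow> tm (A :: complex^'n^'n) $$ (i,j) = A $ fb i $ fb j"
  by (simp add: tm_def)

lemma tm_mult: "tm ((A :: complex^'n::finite^'n) ** B) = tm A * tm B"
proof (rule eq_matI)
  fix i j assume ij: "i < dim_row (tm A * tm B)" "j < dim_col (tm A * tm B)"
  then have ij': "i < CARD('n)" "j < CARD('n)" by auto
  have "(tm A * tm B) $$ (i, j) = (\<Sum>l\<in>{0..<CARD('n)}. tm A $$ (i,l) * tm B $$ (l,j))"
    using ij' by (simp add: scalar_prod_def)
  also have "\<dots> = (\<Sum>l\<in>{0..<CARD('n)}. A $ fb i $ fb l * B $ fb l $ fb j)"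
    using ij' by (intro sum.cong refl) (simp add: tm_index)
  also have "\<dots> = (A ** B) $ fb i $ fb j"
    by (simp add: matrix_matrix_mult_def sum_fb)
  also have "\<dots> = tm (A ** B) $$ (i,j)" using ij' by (simp add: tm_index)
  finally show "tm (A ** B) $$ (i, j) = (tm A * tm B) $$ (i, j)" by simp
qed auto

lemma tm_one: "tm (Finite_Cartesian_Product.mat 1 :: complex^'n::finite^'n) = 1\<^sub>m CARD('n)"
  by (rule eq_matI) (auto simp: tm_index Finite_Cartesian_Product.mat_def fb_inj)

fun mpow :: "complex^'n::finite^'n \<Rightarrow> nat \<Rightarrow> complex^'n^'n" where
  "mpow g 0 = Finite_Cartesian_Product.mat 1"
| "mpow g (Suc k) = mpow g k ** g"

lemma tm_pow: "tm (mpow g k) = tm g ^\<^sub>m k"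
  by (induction k) (simp_all add: tm_one tm_mult)

definition mtr :: "complex Matrix.mat \<Rightarrow> complex" where
  "mtr X = (\<Sum>l\<in>{0..<dim_row X}. X $$ (l,l))"

lemma trace_tm: "trace (A :: complex^'n::finite^'n) = mtr (tm A)"
  unfolding trace_def mtr_def sum_fb by (intro sum.cong refl) (auto simp: tm_index)

lemma mtr_comm:
  assumes X: "X \<in> carrier_mat n n" and Y: "Y \<in> carrier_mat n n"
  shows "mtr (X * Y) = mtr (Y * X)"
proof -
  have "mtr (X * Y) = (\<Sum>l\<in>{0..<n}. \<Sum>m\<in>{0..<n}. X $$ (l,m) * Y $$ (m,l))"
    using X Y unfolding mtr_def by (intro sum.cong refl) (auto simp: scalar_prod_def)
  also have "\<dots> = (\<Sum>m\<in>{0..<n}. \<Sum>l\<in>{0..<n}. Y $$ (m,l) * X $$ (l,m))"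
    by (subst sum.swap) (simp add: mult.commute)
  also have "\<dots> = mtr (Y * X)"
    using X Y unfolding mtr_def by (intro sum.cong refl) (auto simp: scalar_prod_def)
  finally show ?thesis .
qed

lemma ut_mult:
  assumes X: "X \<in> carrier_mat n n" and Y: "Y \<in> carrier_mat n n"
    and uX: "upper_triangular X" and uY: "upper_triangular Y"
  shows "upper_triangular (X * Y) \<and> (\<forall>i<n. (X * Y) $$ (i,i) = X $$ (i,i) * Y $$ (i,i))"
proof
  have e: "(X * Y) $$ (i,j) = (\<Sum>m\<in>{0..<n}. X $$ (i,m) * Y $$ (m,j))" if "i < n" "j < n" for i j
    using X Y that by (simp add: scalar_prod_def)
  show "upper_triangular (X * Y)"
  proof (rule upper_triangularI)
    fix i j assume ij: "j < i" "i < dim_row (X * Y)"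
    then have "i < n" "j < n" using X by auto
    have "X $$ (i,m) * Y $$ (m,j) = 0" if "m < n" for m
    proof (cases "m < i")
      case True then show ?thesis using uX X \<open>i < n\<close> by (simp add: upper_triangular_def)
    next
      case False then have "j < m" using ij by simp
      then show ?thesis using uY Y that by (simp add: upper_triangular_def)
    qed
    then show "(X * Y) $$ (i,j) = 0" using e[OF \<open>i < n\<close> \<open>j < n\<close>] by simp
  qed
  show "\<forall>i<n. (X * Y) $$ (i,i) = X $$ (i,i) * Y $$ (i,i)"
  proof (intro allI impI)
    fix i assume i: "i < n"
    have z: "X $$ (i,m) * Y $$ (m,i) = 0" if "m < n" "m \<noteq> i" for m
    proof (cases "m < i")
      case True then show ?thesis using uX X i by (simp add: upper_triangular_def)
    next
      case False then have "i < m" using that by simp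
      then show ?thesis using uY Y that by (simp add: upper_triangular_def)
    qed
    have "(X * Y) $$ (i,i) = (\<Sum>m\<in>{0..<n}. X $$ (i,m) * Y $$ (m,i))" using e[OF i i] .
    also have "\<dots> = X $$ (i,i) * Y $$ (i,i)"
      by (subst sum.remove[of _ i]) (use i z in auto)
    finally show "(X * Y) $$ (i,i) = X $$ (i,i) * Y $$ (i,i)" .
  qed
qed

lemma ut_pow:
  assumes B: "B \<in> carrier_mat n n" and uB: "upper_triangular B"
  shows "upper_triangular (B ^\<^sub>m k) \<and> (\<forall>i<n. (B ^\<^sub>m k) $$ (i,i) = B $$ (i,i) ^ k)"
proof (induction k)
  case 0 then show ?case using B by auto
next
  case (Suc k)
  have Bk: "B ^\<^sub>m k \<in> carrier_mat n n" using B by simp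
  from ut_mult[OF Bk B _ uB] Suc
  have "upper_triangular (B ^\<^sub>m Suc k)" "\<forall>i<n. (B ^\<^sub>m Suc k) $$ (i,i) = B $$ (i,i) ^ k * B $$ (i,i)"
    by auto
  then show ?case by (metis power_Suc2)
qed

lemma spec_bound:
  fixes g :: "complex^'n::finite^'n"
  assumes ev: "g *v v = c *s v" "v \<noteq> 0" and bd: "\<And>k. norm (trace (mpow g k)) \<le> C"
  shows "norm c \<le> 1"
proof -
  define N where "N = CARD('n)"
  define A where "A = tm g"
  have A: "A \<in> carrier_mat N N" unfolding A_def N_def by (rule tm_carrier)
  define w where "w = Matrix.vec N (\<lambda>i. v $ fb i)"
  have wc: "w \<in> carrier_vec N" by (simp add: w_def)
  have "A *\<^sub>v w = c \<cdot>\<^sub>v w"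
  proof (rule eq_vecI)
    fix i assume "i < dim_vec (c \<cdot>\<^sub>v w)"
    then have i: "i < N" by (simp add: w_def)
    have "(A *\<^sub>v w) $ i = (\<Sum>l\<in>{0..<N}. g $ fb i $ fb l * v $ fb l)"
      using i unfolding A_def N_def w_def by (simp add: scalar_prod_def tm_index)
    also have "\<dots> = (g *v v) $ fb i" by (simp add: matrix_vector_mult_def sum_fb N_def)
    also have "\<dots> = c * v $ fb i" using ev(1) by simp
    also have "\<dots> = (c \<cdot>\<^sub>v w) $ i" using i by (simp add: w_def)
    finally show "(A *\<^sub>v w) $ i = (c \<cdot>\<^sub>v w) $ i" .
  qed (simp add: A_def N_def w_def)
  moreover have "w \<noteq> 0\<^sub>v N"
  proof
    assume w0: "w = 0\<^sub>v N"
    have "\<exists>k. v $ k \<noteq> 0" using ev(2) by (metis Finite_Cartesian_Product.vec_eq_iff Finite_Cartesian_Product.zero_index)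
    then obtain k where k: "v $ k \<noteq> 0" by blast
    obtain l where l: "l < N" "fb l = k" using fb_surj[of k] unfolding N_def by blast
    have "w $ l = v $ k" using l by (simp add: w_def)
    then show False using w0 k l by simp
  qed
  ultimately have "eigenvalue A c" unfolding eigenvalue_def eigenvector_def using A wc by auto
  then have pc: "poly (char_poly A) c = 0" using eigenvalue_root_char_poly[OF A] by simp
  obtain es where es: "char_poly A = (\<Prod>a\<leftarrow>es. [:- a, 1:])" "length es = N"
    using char_poly_factorized[OF A] by blast
  obtain B P Q where sd: "schur_decomposition A es = (B,P,Q)" by (cases "schur_decomposition A es") auto
  from schur_decomposition[OF A es(1) sd]
  have sim: "similar_mat_wit A B P Q" and uB: "upper_triangular B" and dB: "diag_mat B = es" by auto
  from similar_mat_witD2[OF A sim] have QP: "Q * P = 1\<^sub>m N" and B: "B \<in> carrier_mat N N"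
    and P: "P \<in> carrier_mat N N" and Q: "Q \<in> carrier_mat N N" by auto
  have "c \<in> set es" using pc unfolding es(1) by (auto simp: poly_prod_list_zero_iff)
  then obtain j where j: "j < N" "c = B $$ (j,j)" using dB B unfolding diag_mat_def by auto
  have tr: "trace (mpow g k) = (\<Sum>i<N. (B $$ (i,i)) ^ k)" for k
  proof -
    have Bk: "B ^\<^sub>m k \<in> carrier_mat N N" using B by simp
    have "trace (mpow g k) = mtr (A ^\<^sub>m k)" unfolding trace_tm tm_pow A_def ..
    also have "A ^\<^sub>m k = P * B ^\<^sub>m k * Q" by (rule similar_mat_wit_pow_id[OF sim])
    also have "mtr (P * B ^\<^sub>m k * Q) = mtr (Q * (P * B ^\<^sub>m k))"
      using P Q Bk by (intro mtr_comm) auto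
    also have "Q * (P * B ^\<^sub>m k) = (Q * P) * B ^\<^sub>m k" using P Q Bk by simp
    also have "\<dots> = B ^\<^sub>m k" using QP Bk by (simp add: left_mult_one_mat)
    also have "mtr (B ^\<^sub>m k) = (\<Sum>i<N. (B $$ (i,i)) ^ k)"
      unfolding mtr_def using B Bk ut_pow[OF B uB, of k] by (auto simp: atLeast0LessThan intro!: sum.cong)
    finally show ?thesis .
  qed
  have "norm ((\<lambda>i. B $$ (i,i)) j) \<le> 1"
    by (rule power_sums_bounded[where C = C and n = N]) (use bd tr j in auto)
  then show ?thesis using j by simp
qed


lemma real_sq_nonreal:
  fixes z :: complex
  assumes "z * z \<in> \<real>" "z \<notin> \<real>"
  shows "cnj z = - z"
proof -
  have "Im z \<noteq> 0" using assms(2) by (simp add: complex_is_Real_iff)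
  moreover have "Im (z * z) = 0" using assms(1) by (simp add: complex_is_Real_iff)
  ultimately have "Re z = 0" by simp
  then show ?thesis by (simp add: complex_eq_iff)
qed

lemma emb_uminus: assumes M: "subfield_C M" and s: "field_emb M \<sigma>" and a: "a \<in> M"
  shows "\<sigma> (- a) = - \<sigma> a"
  using emb_diff[OF M s sf_0[OF M] a] emb_0[OF M s] by simp

lemma cm_comm:
  assumes sE: "subfield_C E" and sF: "subfield_C F" and tr: "totally_real F"
    and ti: "totally_imaginary E" and q: "quadratic_ext E F" and FE: "F = E \<inter> \<real>"
    and t: "field_emb E \<tau>"
  shows "\<forall>x\<in>E. cnj x \<in> E \<and> \<tau> (cnj x) = cnj (\<tau> x)"
proof -
  from q obtain \<alpha> where al: "F \<subseteq> E" "\<alpha> \<in> E" "\<alpha> \<notin> F" "E = {a + b * \<alpha> | a b. a \<in> F \<and> b \<in> F}"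
    unfolding quadratic_ext_def by blast
  have "\<alpha> * \<alpha> \<in> E" using sf_mult[OF sE al(2) al(2)] .
  then obtain p qq where pq: "p \<in> F" "qq \<in> F" "\<alpha> * \<alpha> = p + qq * \<alpha>" using al(4) by blast
  define \<beta> where "\<beta> = \<alpha> - qq / 2"
  have two: "(2::complex) \<in> F" using sf_of_nat[OF sF, of 2] by simp
  have q2: "qq / 2 \<in> F" using sf_divide[OF sF pq(2) two] .
  have bE: "\<beta> \<in> E" unfolding \<beta>_def using al(1,2) q2 by (intro sf_diff[OF sE]) auto
  have rep: "\<exists>a b. a \<in> F \<and> b \<in> F \<and> x = a + b * \<beta>" if xE: "x \<in> E" for x
  proof -
    obtain a b where ab: "a \<in> F" "b \<in> F" "x = a + b * \<alpha>" using xE al(4) by blast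
    have "a + b * (qq / 2) \<in> F" using ab q2 by (intro sf_add[OF sF] sf_mult[OF sF]) auto
    moreover have "x = (a + b * (qq / 2)) + b * \<beta>" using ab(3) by (simp add: \<beta>_def algebra_simps)
    ultimately show ?thesis using ab(2) by blast
  qed
  have bR: "\<beta> \<notin> \<real>"
  proof
    assume "\<beta> \<in> \<real>"
    then have "\<beta> \<in> F" using bE FE by simp
    then have "\<beta> + qq / 2 \<in> F" using q2 sf_add[OF sF] by blast
    then show False using al(3) by (simp add: \<beta>_def)
  qed
  have bsq: "\<beta> * \<beta> = p + qq * qq / 4" using pq(3) by (simp add: \<beta>_def algebra_simps power2_eq_square)
  have fF: "p + qq * qq / 4 \<in> F"
    using pq sf_of_nat[OF sF, of 4] by (intro sf_add[OF sF] sf_divide[OF sF] sf_mult[OF sF]) auto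
  have FR: "F \<subseteq> \<real>" using FE by auto
  have cb: "cnj \<beta> = - \<beta>" using real_sq_nonreal[OF _ bR] bsq fF FR by auto
  have tF: "field_emb F \<tau>" using t al(1) unfolding field_emb_def by blast
  have tFR: "\<tau> a \<in> \<real>" if "a \<in> F" for a using tr tF that unfolding totally_real_def by blast
  have tb: "\<tau> (a + b * \<beta>) = \<tau> a + \<tau> b * \<tau> \<beta>" if "a \<in> F" "b \<in> F" for a b
  proof -
    have "a \<in> E" "b \<in> E" using that al(1) by auto
    then show ?thesis using emb_add[OF t, of a "b * \<beta>"] emb_mult[OF t, of b \<beta>] bE sf_mult[OF sE] by simp
  qed
  have tbR: "\<tau> \<beta> \<notin> \<real>"
  proof
    assume h: "\<tau> \<beta> \<in> \<real>"
    have "\<tau> ` E \<subseteq> \<real>"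
    proof
      fix y assume "y \<in> \<tau> ` E"
      then obtain x where x: "x \<in> E" "y = \<tau> x" by blast
      obtain a b where ab: "a \<in> F" "b \<in> F" "x = a + b * \<beta>" using rep[OF x(1)] by blast
      show "y \<in> \<real>" using x(2) ab tb[OF ab(1,2)] tFR[OF ab(1)] tFR[OF ab(2)] h by auto
    qed
    then show False using ti t unfolding totally_imaginary_def by blast
  qed
  have "\<tau> \<beta> * \<tau> \<beta> = \<tau> (p + qq * qq / 4)" using emb_mult[OF t bE bE] bsq by simp
  then have "\<tau> \<beta> * \<tau> \<beta> \<in> \<real>" using tFR[OF fF] by simp
  then have ctb: "cnj (\<tau> \<beta>) = - \<tau> \<beta>" using real_sq_nonreal[OF _ tbR] by simp
  show ?thesis
  proof
    fix x assume x: "x \<in> E"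
    obtain a b where ab: "a \<in> F" "b \<in> F" "x = a + b * \<beta>" using rep[OF x] by blast
    have ca: "cnj a = a" "cnj b = b" using ab FR by (auto simp: Reals_cnj_iff)
    have mb: "- b \<in> F" using sf_uminus[OF sF ab(2)] .
    have cx: "cnj x = a + (- b) * \<beta>" using ab(3) ca cb by simp
    have "cnj x \<in> E" unfolding cx using al(1) ab(1) mb bE by (intro sf_add[OF sE] sf_mult[OF sE]) auto
    moreover have "\<tau> (cnj x) = cnj (\<tau> x)"
    proof -
      have "\<tau> (cnj x) = \<tau> a + \<tau> (- b) * \<tau> \<beta>" unfolding cx by (rule tb[OF ab(1) mb])
      also have "\<tau> (- b) = - \<tau> b" using emb_uminus[OF sE t] ab(2) al(1) by auto
      also have "\<tau> a + - \<tau> b * \<tau> \<beta> = cnj (\<tau> a + \<tau> b * \<tau> \<beta>)"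
        using tFR[OF ab(1)] tFR[OF ab(2)] ctb by (simp add: Reals_cnj_iff)
      also have "\<tau> a + \<tau> b * \<tau> \<beta> = \<tau> x" using tb[OF ab(1,2)] ab(3) by simp
      finally show ?thesis .
    qed
    ultimately show "cnj x \<in> E \<and> \<tau> (cnj x) = cnj (\<tau> x)" by blast
  qed
qed

lemma emb_of_nat: assumes M: "subfield_C M" and s: "field_emb M \<sigma>" shows "\<sigma> (of_nat n) = of_nat n"
proof (induction n)
  case 0 then show ?case using emb_0[OF M s] by simp
next
  case (Suc n)
  have "\<sigma> (1 + of_nat n) = \<sigma> 1 + \<sigma> (of_nat n)" by (rule emb_add[OF s sf_1[OF M] sf_of_nat[OF M]])
  then show ?case using Suc emb_1[OF s] by simp
qed

lemma emb_of_int: assumes M: "subfield_C M" and s: "field_emb M \<sigma>" shows "\<sigma> (of_int n) = of_int n"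
proof (cases n rule: int_cases)
  case (nonneg m) then show ?thesis using emb_of_nat[OF M s] by simp
next
  case (neg m)
  have "\<sigma> (- of_nat (Suc m)) = - \<sigma> (of_nat (Suc m))" by (rule emb_uminus[OF M s sf_of_nat[OF M]])
  then show ?thesis using neg emb_of_nat[OF M s, of "Suc m"] by (simp del: of_nat_Suc)
qed

definition inmat :: "complex set \<Rightarrow> complex^'n^'n \<Rightarrow> bool" where
  "inmat E A \<longleftrightarrow> (\<forall>i j. A $ i $ j \<in> E)"

lemma inmat_mult: "subfield_C E \<Longrightarrow> inmat E A \<Longrightarrow> inmat E B \<Longrightarrow> inmat E (A ** B)"
  unfolding inmat_def matrix_matrix_mult_def by (auto intro!: sf_sum sf_mult)

lemma inmat_cadj: "\<forall>x\<in>E. cnj x \<in> E \<Longrightarrow> inmat E A \<Longrightarrow> inmat E (cadj A)"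
  unfolding inmat_def cadj_def by auto

lemma emb_mat_mult:
  assumes M: "subfield_C E" and s: "field_emb E \<tau>" and A: "inmat E A" and B: "inmat E B"
  shows "emb_mat \<tau> (A ** B) = emb_mat \<tau> A ** emb_mat \<tau> B"
proof -
  have "\<tau> (\<Sum>k\<in>UNIV. A $ i $ k * B $ k $ j) = (\<Sum>k\<in>UNIV. \<tau> (A $ i $ k) * \<tau> (B $ k $ j))" for i j
  proof -
    have "\<tau> (\<Sum>k\<in>UNIV. A $ i $ k * B $ k $ j) = (\<Sum>k\<in>UNIV. \<tau> (A $ i $ k * B $ k $ j))"
      using A B unfolding inmat_def by (intro emb_sum[OF M s] sf_mult[OF M]) auto
    also have "\<dots> = (\<Sum>k\<in>UNIV. \<tau> (A $ i $ k) * \<tau> (B $ k $ j))"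
      using A B unfolding inmat_def by (intro sum.cong refl emb_mult[OF s]) auto
    finally show ?thesis .
  qed
  then show ?thesis unfolding emb_mat_def matrix_matrix_mult_def
    by (simp add: Finite_Cartesian_Product.vec_eq_iff)
qed

lemma emb_mat_cadj:
  assumes c: "\<forall>x\<in>E. cnj x \<in> E \<and> \<tau> (cnj x) = cnj (\<tau> x)" and A: "inmat E A"
  shows "emb_mat \<tau> (cadj A) = cadj (emb_mat \<tau> A)"
  using c A unfolding emb_mat_def cadj_def inmat_def by (simp add: Finite_Cartesian_Product.vec_eq_iff)

lemma emb_det:
  assumes M: "subfield_C E" and s: "field_emb E \<tau>" and A: "inmat E A"
  shows "Determinants.det (emb_mat \<tau> A) = \<tau> (Determinants.det A)"
proof -
  have pin: "(\<Prod>i\<in>UNIV. A $ i $ p i) \<in> E" for p using A unfolding inmat_def by (intro sf_prod[OF M]) auto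
  have "\<tau> (Determinants.det A) = (\<Sum>p\<in>{p. p permutes UNIV}. \<tau> (of_int (sign p) * (\<Prod>i\<in>UNIV. A $ i $ p i)))"
    unfolding Determinants.det_def using pin by (intro emb_sum[OF M s] sf_mult[OF M] sf_of_int[OF M]) auto
  also have "\<dots> = (\<Sum>p\<in>{p. p permutes UNIV}. of_int (sign p) * (\<Prod>i\<in>UNIV. \<tau> (A $ i $ p i)))"
  proof (intro sum.cong refl)
    fix p
    have "\<tau> (of_int (sign p) * (\<Prod>i\<in>UNIV. A $ i $ p i)) = \<tau> (of_int (sign p)) * \<tau> (\<Prod>i\<in>UNIV. A $ i $ p i)"
      by (rule emb_mult[OF s sf_of_int[OF M] pin])
    also have "\<dots> = of_int (sign p) * (\<Prod>i\<in>UNIV. \<tau> (A $ i $ p i))"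
      using A emb_of_int[OF M s] unfolding inmat_def by (simp add: emb_prod[OF M s])
    finally show "\<tau> (of_int (sign p) * (\<Prod>i\<in>UNIV. A $ i $ p i)) = of_int (sign p) * (\<Prod>i\<in>UNIV. \<tau> (A $ i $ p i))" .
  qed
  also have "\<dots> = Determinants.det (emb_mat \<tau> A)" unfolding Determinants.det_def emb_mat_def by simp
  finally show ?thesis by simp
qed

lemma emb_trace:
  assumes M: "subfield_C E" and s: "field_emb E \<tau>" and A: "inmat E A"
  shows "trace (emb_mat \<tau> A) = \<tau> (trace A)"
  unfolding trace_def emb_mat_def using A unfolding inmat_def by (simp add: emb_sum[OF M s])

lemma emb_SU:
  assumes M: "subfield_C E" and s: "field_emb E \<tau>" and c: "\<forall>x\<in>E. cnj x \<in> E \<and> \<tau> (cnj x) = cnj (\<tau> x)"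
    and H: "inmat E H" and g: "inmat E g" "g \<in> SU H"
  shows "emb_mat \<tau> g \<in> SU (emb_mat \<tau> H)"
proof -
  have cg: "inmat E (cadj g)" using inmat_cadj c g(1) by blast
  have d: "Determinants.det g = 1" and u: "cadj g ** H ** g = H" using g(2) unfolding SU_def by auto
  have "Determinants.det (emb_mat \<tau> g) = 1" using emb_det[OF M s g(1)] d emb_1[OF s] by simp
  moreover have "cadj (emb_mat \<tau> g) ** emb_mat \<tau> H ** emb_mat \<tau> g = emb_mat \<tau> H"
  proof -
    have "cadj (emb_mat \<tau> g) ** emb_mat \<tau> H ** emb_mat \<tau> g = emb_mat \<tau> (cadj g) ** emb_mat \<tau> H ** emb_mat \<tau> g"
      using emb_mat_cadj[OF c g(1)] by simp
    also have "\<dots> = emb_mat \<tau> (cadj g ** H) ** emb_mat \<tau> g" using emb_mat_mult[OF M s cg H] by simp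
    also have "\<dots> = emb_mat \<tau> (cadj g ** H ** g)"
      using emb_mat_mult[OF M s inmat_mult[OF M cg H] g(1)] by simp
    finally show ?thesis using u by simp
  qed
  ultimately show ?thesis unfolding SU_def by simp
qed

lemma trace_bounded:
  assumes "bounded (S :: (complex^'n::finite^'n) set)"
  shows "\<exists>C. \<forall>M\<in>S. norm (trace M) \<le> C"
proof -
  obtain a where a: "\<forall>x\<in>S. norm x \<le> a" using assms by (auto simp: bounded_iff)
  have "norm (trace M) \<le> of_nat CARD('n) * a" if "M \<in> S" for M
  proof -
    have "norm (trace M) \<le> (\<Sum>i\<in>UNIV. norm (M $ i $ i))" unfolding trace_def by (rule norm_sum)
    also have "\<dots> \<le> (\<Sum>i\<in>(UNIV::'n set). a)"
    proof (rule sum_mono)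
      fix i :: 'n
      have "norm (M $ i $ i) \<le> norm (M $ i)" by (rule Finite_Cartesian_Product.norm_nth_le)
      also have "\<dots> \<le> norm M" by (rule Finite_Cartesian_Product.norm_nth_le)
      finally show "norm (M $ i $ i) \<le> a" using a that by force
    qed
    also have "\<dots> = of_nat CARD('n) * a" by simp
    finally show ?thesis .
  qed
  then show ?thesis by blast
qed

lemma mpow_in: assumes G: "is_subgroup \<Gamma> X" and g: "g \<in> \<Gamma>" shows "mpow g k \<in> \<Gamma>"
  using G g by (induction k) (auto simp: is_subgroup_def)


lemma mat_vec_scale: "(A :: complex^'n::finite^'m::finite) *v (c *s x) = c *s (A *v x)"
  by (simp add: Finite_Cartesian_Product.vec_eq_iff matrix_vector_mult_def sum_distrib_left algebra_simps)

theorem mainTheorem6: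
  fixes E F :: "complex set" and H :: "complex^'n^'n" and \<Gamma> :: "(complex^'n^'n) set"
  assumes "number_field F" and "totally_real F"
    and "number_field E" and "totally_imaginary E" and "quadratic_ext E F"
    and "F = E \<inter> \<real>"
    and "\<forall>i j. H $ i $ j \<in> E"
    and "has_signature H (CARD('n) - 1) 1"
    and "admissible H E"
    and "is_subgroup \<Gamma> (SU_int H E)"
    and "\<exists>g\<in>\<Gamma>. loxodromic g"
  shows "field_gen (trace ` \<Gamma>) = E \<or> field_gen (trace ` \<Gamma>) = F"
proof -
  note nF = assms(1) and trF = assms(2) and nE = assms(3) and tiE = assms(4) and qE = assms(5)
    and FE = assms(6) and Hent = assms(7) and adm = assms(9) and sub = assms(10) and lox = assms(11)
  have sE: "subfield_C E" using nE by (simp add: number_field_def)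
  have sF: "subfield_C F" using nF by (simp add: number_field_def)
  have FsE: "F \<subseteq> E" using qE by (simp add: quadratic_ext_def)
  define K where "K = field_gen (trace ` \<Gamma>)"
  have sK: "subfield_C K" unfolding K_def by (rule field_gen_subfield)
  have GSU: "\<Gamma> \<subseteq> SU_int H E" using sub by (simp add: is_subgroup_def)
  have gE: "inmat E \<gamma>" if "\<gamma> \<in> \<Gamma>" for \<gamma>
    using GSU that unfolding SU_int_def ring_of_integers_def inmat_def by blast
  have gSU: "\<gamma> \<in> SU H" if "\<gamma> \<in> \<Gamma>" for \<gamma> using GSU that unfolding SU_int_def by blast
  have HE: "inmat E H" using Hent by (simp add: inmat_def)
  have trE: "trace \<gamma> \<in> E" if "\<gamma> \<in> \<Gamma>" for \<gamma>
    using gE[OF that] unfolding trace_def inmat_def by (intro sf_sum[OF sE]) auto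
  have KE: "K \<subseteq> E" unfolding K_def by (rule field_gen_least[OF sE]) (use trE in auto)
  have trK: "trace \<gamma> \<in> K" if "\<gamma> \<in> \<Gamma>" for \<gamma> using field_gen_sup[of "trace ` \<Gamma>"] that unfolding K_def by auto
  have key: "(\<forall>x\<in>E. \<tau> x = x) \<or> (\<forall>x\<in>E. \<tau> x = cnj x)"
    if t: "field_emb E \<tau>" and fx: "\<forall>k\<in>K. \<tau> k = k" for \<tau>
  proof (rule ccontr)
    assume nt: "\<not> ?thesis"
    have "compact (SU (emb_mat \<tau> H))" using adm nt t unfolding admissible_def by blast
    then obtain Cb where Cb: "\<forall>M\<in>SU (emb_mat \<tau> H). norm (trace M) \<le> Cb"
      using trace_bounded compact_imp_bounded by blast
    have cc: "\<forall>x\<in>E. cnj x \<in> E \<and> \<tau> (cnj x) = cnj (\<tau> x)"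
      by (rule cm_comm[OF sE sF trF tiE qE FE t])
    have trb: "norm (trace \<gamma>) \<le> Cb" if g: "\<gamma> \<in> \<Gamma>" for \<gamma>
    proof -
      have "emb_mat \<tau> \<gamma> \<in> SU (emb_mat \<tau> H)" by (rule emb_SU[OF sE t cc HE gE[OF g] gSU[OF g]])
      then have "norm (trace (emb_mat \<tau> \<gamma>)) \<le> Cb" using Cb by blast
      moreover have "trace (emb_mat \<tau> \<gamma>) = trace \<gamma>"
        using emb_trace[OF sE t gE[OF g]] fx trK[OF g] by simp
      ultimately show ?thesis by simp
    qed
    obtain g v c where g: "g \<in> \<Gamma>" "v \<noteq> 0" "g *v v = c *s v" "norm c \<noteq> 1"
      using lox unfolding loxodromic_def by blast
    obtain g' v' c' where g': "g' \<in> \<Gamma>" "v' \<noteq> 0" "g' *v v' = c' *s v'" "norm c' > 1"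
    proof (cases "norm c > 1")
      case True then show ?thesis using that g by blast
    next
      case False
      then have c1: "norm c < 1" using g(4) by simp
      obtain h where h: "h \<in> \<Gamma>" "g ** h = Finite_Cartesian_Product.mat 1"
        using sub g(1) unfolding is_subgroup_def by blast
      have hg: "h ** g = Finite_Cartesian_Product.mat 1" using h(2) matrix_left_right_inverse by blast
      have vv: "h *v (g *v v) = v" using hg by (simp add: matrix_vector_mul_assoc)
      have c0: "c \<noteq> 0"
      proof
        assume "c = 0"
        then have "g *v v = 0" using g(3) by simp
        then show False using vv g(2) by simp
      qed
      have "c *s (h *v v) = v" using vv g(3) by (simp add: mat_vec_scale)
      then have "h *v v = inverse c *s v" using c0 by (metis vector_smult_assoc left_inverse vector_smult_lid)
      moreover have "norm (inverse c) > 1" using c1 c0 by (simp add: norm_inverse one_less_inverse)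
      ultimately show ?thesis using that h(1) g(2) by blast
    qed
    have "norm c' \<le> 1"
      by (rule spec_bound[OF g'(3) g'(2)]) (rule trb[OF mpow_in[OF sub g'(1)]])
    then show False using g'(4) by simp
  qed
  show ?thesis
  proof (rule ccontr)
    assume nt: "\<not> ?thesis"
    then have KnE: "K \<noteq> E" and KnF: "K \<noteq> F" unfolding K_def by auto
    show False
    proof (cases "K \<subseteq> F")
      case True
      then obtain \<theta> where th: "\<theta> \<in> F" "\<theta> \<notin> K" using KnF by blast
      have thE: "\<theta> \<in> E" using th FsE by auto
      obtain \<tau> where t: "field_emb E \<tau>" "\<forall>k\<in>K. \<tau> k = k" "\<tau> \<theta> \<noteq> \<theta>"
        using move_emb[OF nE sK KE thE th(2)] by blast
      have "\<theta> \<in> \<real>" using th FE by auto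
      then have "cnj \<theta> = \<theta>" by (simp add: Reals_cnj_iff)
      then show False using key[OF t(1,2)] t(3) thE by auto
    next
      case False
      then obtain k where k: "k \<in> K" "k \<notin> F" by blast
      have kE: "k \<in> E" using k KE by auto
      have kR: "k \<notin> \<real>" using k kE FE by auto
      obtain \<theta> where th: "\<theta> \<in> E" "\<theta> \<notin> K" using KnE KE by blast
      obtain \<tau> where t: "field_emb E \<tau>" "\<forall>k\<in>K. \<tau> k = k" "\<tau> \<theta> \<noteq> \<theta>"
        using move_emb[OF nE sK KE th] by blast
      have "cnj k \<noteq> k" using kR by (simp add: Reals_cnj_iff)
      then show False using key[OF t(1,2)] t(2,3) th(1) k(1) kE by force
    qed
  qed
qed


end
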